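(* Let $F_1,\dots,F_n:\mathbb{R}^d\to\mathbb{R}^d$, $F=\frac1n\sum_{i=1}^nF_i$, and let $x^*$ satisfy $F(x^* )=0$. Assume $F$ is $L$-Lipschitz and $\mu$-quasi strongly monotone ($\mu>0$), and that the Expected Residual condition holds with parameter $\delta>0$ for $g=F_v$, $v\sim\mathcal D$. Let $\sigma_*^2=\mathbb{E}\|F_v(x^* )\|^2<\infty$. Run SPEG with $\gamma_k=\omega_k=\omega$ for all $k$, where $0<\omega\le\min\{\frac{\mu}{18\delta},\frac{1}{4L}\}$. Then for all $k\ge0$, $$R_k^2\le\Big(1-\frac{\omega\mu}{2}\Big)^kR_0^2+\frac{24\omega\sigma_*^2}{\mu},$$ where $R_k^2:=\mathbb{E}\big[\|x_k-x^*\|^2+\|x_k-\hat x_{k-1}\|^2\big]$. Consequently, for any $\varepsilon>0$, choosing $\omega=\min\{\frac{\mu}{18\delta},\frac1{4L},\frac{\varepsilon\mu}{48\sigma_*^2}\}$, SPEG achieves $\mathbb{E}\|x_K-x^*\|^2\le\varepsilon$ after any $$K\ge\max\Big\{\frac{8L}{\mu},\frac{36\delta}{\mu^2},\frac{96\sigma_*^2}{\varepsilon\mu^2}\Big\}\log\Big(\frac{2R_0^2}{\varepsilon}\Big)$$ iterations.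
   Context: Problem: find $x^*$ with $F(x^* )=0$. $F$ is $L$-Lipschitz: $\|F(x)-F(y)\|\le L\|x-y\|$. $\mu$-quasi strongly monotone: $\langle F(x),x-x^*\rangle\ge\mu\|x-x^*\|^2$ for all $x$. A sampling distribution $\mathcal D$ is a distribution of a random vector $v\in\mathbb{R}^n_+$ with $\mathbb{E}_{\mathcal D}[v_i]=1$ for all $i$; $F_v(x):=\frac1n\sum_{i=1}^nv_iF_i(x)$. Expected Residual condition with parameter $\delta$: $\mathbb{E}\|(F_v(x)-F_v(x^* ))-(F(x)-F(x^* ))\|^2\le\frac\delta2\|x-x^*\|^2$ for all $x$. SPEG (stochastic past extragradient): given $x_0$, set $\hat x_{-1}=x_0$ and for $k\ge0$: $\hat x_k=x_k-\gamma_kF_{v_{k-1}}(\hat x_{k-1})$, $x_{k+1}=x_k-\omega_kF_{v_k}(\hat x_k)$, where $v_{-1},v_0,v_1,\dots$ are i.i.d. samples from $\mathcal D$. Expectations are over all randomness of the algorithm. *)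

theory Defs
  imports "HOL-Analysis.Analysis" "HOL-Probability.Probability"
begin

definition Fmean :: "nat \<Rightarrow> (nat \<Rightarrow> 'a::real_normed_vector \<Rightarrow> 'a) \<Rightarrow> 'a \<Rightarrow> 'a" where
  "Fmean n F x = (1 / real n) *\<^sub>R (\<Sum>i<n. F i x)"

definition Fsamp :: "nat \<Rightarrow> (nat \<Rightarrow> 'a::real_normed_vector \<Rightarrow> 'a) \<Rightarrow> (nat \<Rightarrow> real) \<Rightarrow> 'a \<Rightarrow> 'a" where
  "Fsamp n F v x = (1 / real n) *\<^sub>R (\<Sum>i<n. v i *\<^sub>R F i x)"

definition sampling_distribution :: "nat \<Rightarrow> (nat \<Rightarrow> real) measure \<Rightarrow> bool" where
  "sampling_distribution n D \<longleftrightarrow>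
     prob_space D \<and> sets D = sets (PiM {..<n} (\<lambda>_. borel)) \<and>
     (AE v in D. \<forall>i<n. 0 \<le> v i) \<and>
     (\<forall>i<n. integrable D (\<lambda>v. v i) \<and> (\<integral>v. v i \<partial>D) = 1)"

text \<open>SPEG iterates driven by a sample sequence w, where w 0 = v_{-1} and w (k+1) = v_k.
  spec_state n F gam om x0 w k = (x_k, xhat_{k-1}), with xhat_{-1} = x0.\<close>
primrec speg_state :: "nat \<Rightarrow> (nat \<Rightarrow> 'a::real_normed_vector \<Rightarrow> 'a) \<Rightarrow> (nat \<Rightarrow> real) \<Rightarrow> (nat \<Rightarrow> real)
     \<Rightarrow> 'a \<Rightarrow> (nat \<Rightarrow> nat \<Rightarrow> real) \<Rightarrow> nat \<Rightarrow> 'a \<times> 'a" where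
  "speg_state n F gam om x0 w 0 = (x0, x0)"
| "speg_state n F gam om x0 w (Suc k) =
     (let xk = fst (speg_state n F gam om x0 w k);
          xh = xk - gam k *\<^sub>R Fsamp n F (w k) (snd (speg_state n F gam om x0 w k))
      in (xk - om k *\<^sub>R Fsamp n F (w (Suc k)) xh, xh))"

definition iid_samples :: "(nat \<Rightarrow> real) measure \<Rightarrow> (nat \<Rightarrow> nat \<Rightarrow> real) measure" where
  "iid_samples D = PiM UNIV (\<lambda>_::nat. D)"

definition Rsq :: "nat \<Rightarrow> (nat \<Rightarrow> 'a::real_normed_vector \<Rightarrow> 'a) \<Rightarrow> (nat \<Rightarrow> real) measure
     \<Rightarrow> real \<Rightarrow> 'a \<Rightarrow> 'a \<Rightarrow> nat \<Rightarrow> ennreal" where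
  "Rsq n F D om x0 xs k =
     (\<integral>\<^sup>+ w. ennreal (norm (fst (speg_state n F (\<lambda>_. om) (\<lambda>_. om) x0 w k) - xs)^2
               + norm (fst (speg_state n F (\<lambda>_. om) (\<lambda>_. om) x0 w k)
                       - snd (speg_state n F (\<lambda>_. om) (\<lambda>_. om) x0 w k))^2) \<partial>iid_samples D)"

end

theory Submission
  imports Defs
begin


lemma fresh_sample:
  fixes D :: "'b measure" and f :: "(nat \<Rightarrow> 'b) \<Rightarrow> 'b \<Rightarrow> ennreal"
  assumes D: "prob_space D"
    and meas: "(\<lambda>(w,v). f w v) \<in> borel_measurable (PiM UNIV (\<lambda>_::nat. D) \<Otimes>\<^sub>M D)"
    and inv: "\<And>w x. f (w(m:=x)) = f w"
  shows "(\<integral>\<^sup>+ w. f w (w m) \<partial>PiM UNIV (\<lambda>_. D)) = (\<integral>\<^sup>+ w. (\<integral>\<^sup>+ v. f w v \<partial>D) \<partial>PiM UNIV (\<lambda>_. D))"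
proof -
  interpret D: prob_space D by (rule D)
  define P' where "P' = PiM (UNIV - {m}) (\<lambda>_::nat. D)"
  define PP where "PP = PiM (UNIV::nat set) (\<lambda>_::nat. D)"
  interpret P': prob_space P' unfolding P'_def by (intro prob_space_PiM D)
  interpret PP: prob_space PP unfolding PP_def by (intro prob_space_PiM D)
  interpret DP: pair_sigma_finite D P' by unfold_locales
  have ins: "insert m (UNIV - {m}) = (UNIV::nat set)" by auto
  have distr: "distr (D \<Otimes>\<^sub>M P') PP (\<lambda>(x, X). X(m := x)) = PP"
    using distr_pair_PiM_eq_PiM[of "UNIV - {m}" "\<lambda>_. D" m] D unfolding P'_def PP_def ins by simp
  have Psi: "(\<lambda>(x, X). X(m := x)) \<in> measurable (D \<Otimes>\<^sub>M P') PP"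
  proof -
    have "(\<lambda>(x, X). X(m := x)) \<in> measurable (D \<Otimes>\<^sub>M P') (PiM (insert m (UNIV - {m})) (\<lambda>_. D))"
      unfolding P'_def by measurable
    then show ?thesis unfolding PP_def ins .
  qed
  have gm: "(\<lambda>w. f w (w m)) \<in> borel_measurable PP"
  proof -
    have "(\<lambda>w. (w, w m)) \<in> measurable PP (PP \<Otimes>\<^sub>M D)"
      unfolding PP_def by (intro measurable_Pair measurable_ident_sets refl measurable_component_singleton) auto
    from measurable_compose[OF this meas[folded PP_def]] show ?thesis by simp
  qed
  have hm: "(\<lambda>w. \<integral>\<^sup>+ v. f w v \<partial>D) \<in> borel_measurable PP"
    using D.borel_measurable_nn_integral[OF meas] unfolding PP_def .
  have tr: "(\<integral>\<^sup>+ w. g w \<partial>PP) = (\<integral>\<^sup>+ p. g ((snd p)(m := fst p)) \<partial>(D \<Otimes>\<^sub>M P'))"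
    if g: "g \<in> borel_measurable PP" for g
  proof -
    have "(\<integral>\<^sup>+ w. g w \<partial>PP) = (\<integral>\<^sup>+ w. g w \<partial>distr (D \<Otimes>\<^sub>M P') PP (\<lambda>(x, X). X(m := x)))"
      by (simp only: distr)
    also have "\<dots> = (\<integral>\<^sup>+ p. g ((\<lambda>(x, X). X(m := x)) p) \<partial>(D \<Otimes>\<^sub>M P'))"
      by (rule nn_integral_distr[OF Psi]) (simp add: g distr)
    finally show ?thesis by (simp add: case_prod_beta)
  qed
  have "(\<integral>\<^sup>+ w. f w (w m) \<partial>PP) = (\<integral>\<^sup>+ p. f ((snd p)(m := fst p)) (fst p) \<partial>(D \<Otimes>\<^sub>M P'))"
    using tr[OF gm] by simp
  also have "\<dots> = (\<integral>\<^sup>+ X. \<integral>\<^sup>+ x. f (X(m := x)) x \<partial>D \<partial>P')"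
    apply (subst DP.nn_integral_snd[symmetric])
    using measurable_compose[OF Psi gm] apply (simp add: case_prod_beta)
    by simp
  also have "\<dots> = (\<integral>\<^sup>+ X. \<integral>\<^sup>+ x. f (X(m := undefined)) x \<partial>D \<partial>P')"
    by (simp add: inv)
  also have "\<dots> = (\<integral>\<^sup>+ X. \<integral>\<^sup>+ x. (\<integral>\<^sup>+ v. f (X(m := x)) v \<partial>D) \<partial>D \<partial>P')"
    by (simp add: inv D.emeasure_space_1)
  also have "\<dots> = (\<integral>\<^sup>+ p. (\<integral>\<^sup>+ v. f ((snd p)(m := fst p)) v \<partial>D) \<partial>(D \<Otimes>\<^sub>M P'))"
    apply (subst DP.nn_integral_snd[symmetric])
    using measurable_compose[OF Psi hm] apply (simp add: case_prod_beta)
    by simp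
  also have "\<dots> = (\<integral>\<^sup>+ w. (\<integral>\<^sup>+ v. f w v \<partial>D) \<partial>PP)"
    using tr[OF hm] by simp
  finally show ?thesis unfolding PP_def .
qed


lemma ennreal_2mult: "0 \<le> X \<Longrightarrow> ennreal (2 * X) = 2 * ennreal X"
  by (simp add: ennreal_mult)

lemma norm_add_sq_le: "(norm (a + b))^2 \<le> 2 * (norm a)^2 + 2 * (norm (b::'a::real_normed_vector))^2"
proof -
  have "norm (a + b) \<le> norm a + norm b" by (rule norm_triangle_ineq)
  then have "(norm (a + b))^2 \<le> (norm a + norm b)^2" by (simp add: power_mono)
  also have "\<dots> \<le> 2 * (norm a)^2 + 2 * (norm b)^2"
    using sum_squares_ge_zero[of "norm a - norm b" 0] by (simp add: power2_eq_square algebra_simps)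
  finally show ?thesis .
qed

lemma norm_diff_scale_sq: "(norm (d - w *\<^sub>R y))^2 = (norm d)^2 - 2 * w * inner d y + w^2 * (norm (y::'a::real_inner))^2"
  unfolding power2_norm_eq_inner
  by (simp only: inner_diff_left inner_diff_right inner_scaleR_left inner_scaleR_right inner_commute[of y d])
     (simp add: algebra_simps power2_eq_square)

lemma det_arith:
  fixes P Q H Z T W R N2 K w \<mu> \<delta> L :: real
  assumes f1: "2 * w * (\<mu> * Z) \<le> 2 * w * T"
  and f2: "2 * w\<^sup>2 * W \<le> 2 * w\<^sup>2 * (2 * (L\<^sup>2 * R) + 2 * N2)"
  and f3: "w\<^sup>2 * (L\<^sup>2 * R) \<le> K * (2 * Q + 2 * H)"
  and f4: "K * Q \<le> Q / 16" "K * H \<le> H / 16"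
  and f5: "(w * \<mu> - w\<^sup>2 * \<delta>) * P \<le> (w * \<mu> - w\<^sup>2 * \<delta>) * (2 * Z + 2 * H)"
  and f6: "(w * \<mu> - w\<^sup>2 * \<delta>) * H \<le> H / 4"
  shows "P - 2 * w * T + 2 * w^2 * W - H + 2 * w^2 * (\<delta> * Z) \<le> (1 - w * \<mu> + w^2 * \<delta>) * P + (1/2) * Q + 4 * w^2 * N2"
proof -
  have g1: "w * \<mu> * Z \<le> w * T" using f1 by (simp add: algebra_simps)
  have g2: "w\<^sup>2 * W \<le> 2 * (w\<^sup>2 * L\<^sup>2 * R) + 2 * (w\<^sup>2 * N2)" using f2 by (simp add: algebra_simps)
  have g3: "w\<^sup>2 * L\<^sup>2 * R \<le> 2 * (K * Q) + 2 * (K * H)" using f3 by (simp add: algebra_simps)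
  have g5: "w * \<mu> * P - w\<^sup>2 * \<delta> * P \<le> 2 * (w * \<mu> * Z) - 2 * (w\<^sup>2 * \<delta> * Z) + 2 * (w * \<mu> * H) - 2 * (w\<^sup>2 * \<delta> * H)"
    using f5 by (simp add: algebra_simps)
  have g6: "w * \<mu> * H - w\<^sup>2 * \<delta> * H \<le> H / 4" using f6 by (simp add: algebra_simps)
  have l: "P - 2 * w * T + 2 * w^2 * W - H + 2 * w^2 * (\<delta> * Z) = P - 2 * (w * T) + 2 * (w\<^sup>2 * W) - H + 2 * (w\<^sup>2 * \<delta> * Z)"
    by (simp add: algebra_simps)
  have r: "(1 - w * \<mu> + w^2 * \<delta>) * P + (1/2) * Q + 4 * w^2 * N2 = P - w * \<mu> * P + w\<^sup>2 * \<delta> * P + Q / 2 + 4 * (w\<^sup>2 * N2)"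
    by (simp add: algebra_simps)
  show ?thesis unfolding l r using g1 g2 g3 g5 g6 f4 by linarith
qed

lemma det_step:
  fixes a b xs gh :: "'a::real_inner" and Fm :: "'a \<Rightarrow> 'a"
  assumes w: "0 < w" and wL: "w * L \<le> 1/4" and wd: "w * \<delta> \<le> \<mu>/18" and wm: "w * \<mu> \<le> 1/4"
    and mu: "0 < \<mu>" and delta: "0 < \<delta>" and L: "0 \<le> L"
    and qsm: "inner (Fm (a - w *\<^sub>R gh)) ((a - w *\<^sub>R gh) - xs) \<ge> \<mu> * (norm ((a - w *\<^sub>R gh) - xs))^2"
    and lip: "norm (Fm (a - w *\<^sub>R gh) - Fm b) \<le> L * norm ((a - w *\<^sub>R gh) - b)"
  shows "(norm (a - xs - w *\<^sub>R Fm (a - w *\<^sub>R gh)))^2 + (norm (a - (a - w *\<^sub>R gh) - w *\<^sub>R Fm (a - w *\<^sub>R gh)))^2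
           + 2 * w^2 * (\<delta> * (norm ((a - w *\<^sub>R gh) - xs))^2)
     \<le> (1 - w * \<mu> + w^2 * \<delta>) * (norm (a - xs))^2 + (1/2) * (norm (a - b))^2 + 4 * w^2 * (norm (gh - Fm b))^2"
proof -
  define xh where "xh = a - w *\<^sub>R gh"
  define Fx where "Fx = Fm xh"
  define P where "P = (norm (a - xs))^2"
  define Q where "Q = (norm (a - b))^2"
  define H where "H = w^2 * (norm gh)^2"
  define Z where "Z = (norm (xh - xs))^2"
  define T where "T = inner Fx (xh - xs)"
  define W where "W = (norm (Fx - gh))^2"
  define R where "R = (norm (xh - b))^2"
  define N2 where "N2 = (norm (gh - Fm b))^2"
  define K where "K = w^2 * L^2"
  have e1: "(norm (a - xs - w *\<^sub>R Fx))^2 = P - 2 * w * inner (a - xs) Fx + w^2 * (norm Fx)^2"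
    unfolding P_def by (rule norm_diff_scale_sq)
  have e2: "inner (a - xs) Fx = T + w * inner gh Fx"
    unfolding T_def xh_def by (simp add: inner_diff_left inner_diff_right inner_commute algebra_simps)
  have e3: "(norm (a - xh - w *\<^sub>R Fx))^2 = w^2 * (norm (gh - Fx))^2"
  proof -
    have "a - xh - w *\<^sub>R Fx = w *\<^sub>R (gh - Fx)" unfolding xh_def by (simp add: algebra_simps)
    then show ?thesis by (simp add: power_mult_distrib)
  qed
  have e4: "(norm (gh - Fx))^2 = (norm gh)^2 - 2 * inner gh Fx + (norm Fx)^2"
    using norm_diff_scale_sq[of gh 1 Fx] by simp
  have WW: "W = (norm (gh - Fx))^2" unfolding W_def by (simp add: norm_minus_commute)
  have lhs: "(norm (a - xs - w *\<^sub>R Fx))^2 + (norm (a - xh - w *\<^sub>R Fx))^2 = P - 2 * w * T + 2 * w^2 * W - H"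
    unfolding e1 e2 e3 WW H_def e4 by (simp add: algebra_simps power2_eq_square)
  have W1: "W \<le> 2 * (norm (Fx - Fm b))^2 + 2 * N2"
  proof -
    have "Fx - gh = (Fx - Fm b) + (- (gh - Fm b))" by simp
    then show ?thesis unfolding W_def N2_def using norm_add_sq_le[of "Fx - Fm b" "- (gh - Fm b)"]
      by (simp add: norm_minus_commute)
  qed
  have W2: "(norm (Fx - Fm b))^2 \<le> L^2 * R"
  proof -
    have "norm (Fx - Fm b) \<le> L * norm (xh - b)" using lip unfolding Fx_def xh_def .
    then have "(norm (Fx - Fm b))^2 \<le> (L * norm (xh - b))^2" by (simp add: power_mono)
    then show ?thesis unfolding R_def by (simp add: power_mult_distrib)
  qed
  have R1: "R \<le> 2 * Q + 2 * H"
  proof -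
    have eq: "xh - b = (a - b) + (- (w *\<^sub>R gh))" unfolding xh_def by simp
    show ?thesis unfolding R_def Q_def H_def eq using norm_add_sq_le[of "a - b" "- (w *\<^sub>R gh)"]
      by (simp add: power_mult_distrib)
  qed
  have P1: "P \<le> 2 * Z + 2 * H"
  proof -
    have eq: "a - xs = (xh - xs) + w *\<^sub>R gh" unfolding xh_def by simp
    show ?thesis unfolding P_def Z_def H_def eq using norm_add_sq_le[of "xh - xs" "w *\<^sub>R gh"]
      by (simp add: power_mult_distrib)
  qed
  have T1: "T \<ge> \<mu> * Z" using qsm unfolding T_def Z_def Fx_def xh_def .
  have Hnn: "H \<ge> 0" "Q \<ge> 0" "N2 \<ge> 0" "Z \<ge> 0" "R \<ge> 0" unfolding H_def Q_def N2_def Z_def R_def by auto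
  have wLnn: "w * L \<ge> 0" using w L by simp
  have K1: "K \<le> 1/16"
  proof -
    have "(w * L)^2 \<le> (1/4)^2" using wLnn wL by (intro power_mono) auto
    then show ?thesis unfolding K_def by (simp add: power_mult_distrib power2_eq_square mult_ac)
  qed
  have K0: "K \<ge> 0" unfolding K_def by simp
  define c where "c = 2 * w * \<mu> - 2 * w^2 * \<delta>"
  have c0: "c \<ge> 0"
  proof -
    have "w^2 * \<delta> = w * (w * \<delta>)" by (simp add: power2_eq_square)
    also have "\<dots> \<le> w * (\<mu> / 18)" using w wd by (intro mult_left_mono) auto
    finally have h: "w^2 * \<delta> \<le> w * (\<mu> / 18)" .
    then have h2: "w^2 * \<delta> * 18 \<le> w * \<mu>" by simp
    have "0 < w * \<mu>" using w mu by simp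
    then show ?thesis unfolding c_def using h2 by linarith
  qed
  have c1: "c \<le> 1/2"
  proof -
    have "0 \<le> w^2 * \<delta>" using delta by simp
    then show ?thesis unfolding c_def using wm by linarith
  qed
  have f1: "2 * w * T \<ge> 2 * w * (\<mu> * Z)" using T1 w by simp
  have f2: "2 * w^2 * W \<le> 2 * w^2 * (2 * (L^2 * R) + 2 * N2)"
    using W1 W2 by (intro mult_left_mono) auto
  have f3: "w^2 * (L^2 * R) \<le> K * (2 * Q + 2 * H)"
    unfolding K_def using R1 by (simp add: mult.assoc mult_left_mono)
  have f4: "K * Q \<le> Q / 16" "K * H \<le> H / 16"
    using K1 Hnn by (auto intro: mult_right_mono[of K "1/16", simplified])
  have f5: "(w * \<mu> - w\<^sup>2 * \<delta>) * P \<le> (w * \<mu> - w\<^sup>2 * \<delta>) * (2 * Z + 2 * H)"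
    using P1 c0 unfolding c_def by (intro mult_left_mono) auto
  have f6: "(w * \<mu> - w\<^sup>2 * \<delta>) * H \<le> H / 4"
    using mult_right_mono[of "w * \<mu> - w\<^sup>2 * \<delta>" "1/4" H] c1 Hnn unfolding c_def by auto
  have goal: "P - 2 * w * T + 2 * w^2 * W - H + 2 * w^2 * (\<delta> * Z) \<le> (1 - w * \<mu> + w^2 * \<delta>) * P + (1/2) * Q + 4 * w^2 * N2"
    by (rule det_arith[OF f1 f2 f3 f4 f5 f6])
  show ?thesis using goal lhs unfolding xh_def[symmetric] Fx_def[symmetric] Z_def[symmetric] P_def[symmetric] Q_def[symmetric] N2_def[symmetric]
    by linarith
qed


context
  fixes n :: nat and F :: "nat \<Rightarrow> 'a::euclidean_space \<Rightarrow> 'a" and D :: "(nat \<Rightarrow> real) measure"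
  assumes Fmeas: "\<And>i. i < n \<Longrightarrow> F i \<in> borel_measurable borel"
    and Dsd: "sampling_distribution n D"
begin

lemma Dprob: "prob_space D" using Dsd unfolding sampling_distribution_def by blast

lemma Dsets: "sets D = sets (PiM {..<n} (\<lambda>_. borel))" using Dsd unfolding sampling_distribution_def by blast

lemma coord_meas: "i < n \<Longrightarrow> (\<lambda>v. v i) \<in> borel_measurable D"
proof -
  assume i: "i < n"
  have "(\<lambda>v. v i) \<in> borel_measurable (PiM {..<n} (\<lambda>_. borel))"
    using i by (intro measurable_component_singleton) auto
  then show ?thesis by (subst measurable_cong_sets[OF Dsets refl]) assumption
qed

lemma Fsamp_meas:
  assumes f: "f \<in> measurable M D" and h: "h \<in> borel_measurable M"
  shows "(\<lambda>w. Fsamp n F (f w) (h w)) \<in> borel_measurable M"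
  unfolding Fsamp_def
proof (intro borel_measurable_scaleR borel_measurable_const borel_measurable_sum)
  fix i assume "i \<in> {..<n}"
  then have i: "i < n" by simp
  show "(\<lambda>x. f x i) \<in> borel_measurable M"
    using measurable_compose[OF f coord_meas[OF i]] by simp
  show "(\<lambda>x. F i (h x)) \<in> borel_measurable M"
    using measurable_compose[OF h Fmeas[OF i]] by simp
qed

lemma Fsamp_meas_D: "(\<lambda>v. Fsamp n F v x) \<in> borel_measurable D"
  using Fsamp_meas[of "\<lambda>v. v" D "\<lambda>_. x"] by simp

lemma inner_Fsamp: "inner a (Fsamp n F v x) = (1 / real n) * (\<Sum>i<n. v i * inner a (F i x))"
  by (simp add: Fsamp_def inner_sum_right)

lemma inner_Fmean: "inner a (Fmean n F x) = (1 / real n) * (\<Sum>i<n. inner a (F i x))"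
  by (simp add: Fmean_def inner_sum_right)

lemma int_inner:
  shows "integrable D (\<lambda>v. inner a (Fsamp n F v x))"
    and "(\<integral>v. inner a (Fsamp n F v x) \<partial>D) = inner a (Fmean n F x)"
proof -
  have iv: "integrable D (\<lambda>v. v i)" and ev: "(\<integral>v. v i \<partial>D) = 1" if "i < n" for i
    using Dsd that unfolding sampling_distribution_def by blast+
  have ii: "integrable D (\<lambda>v. v i * inner a (F i x))" if "i \<in> {..<n}" for i
    using iv[of i] that by simp
  show "integrable D (\<lambda>v. inner a (Fsamp n F v x))"
    unfolding inner_Fsamp using ii by (intro integrable_mult_right integrable_sum) auto
  have "(\<integral>v. inner a (Fsamp n F v x) \<partial>D) = (1 / real n) * (\<Sum>i<n. (\<integral>v. v i * inner a (F i x) \<partial>D))"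
    unfolding inner_Fsamp integral_mult_right_zero by (subst Bochner_Integration.integral_sum) (use ii in auto)
  also have "\<dots> = (1 / real n) * (\<Sum>i<n. inner a (F i x))"
    using ev by (intro arg_cong[where f="\<lambda>t. (1 / real n) * t"] sum.cong refl) simp
  finally show "(\<integral>v. inner a (Fsamp n F v x) \<partial>D) = inner a (Fmean n F x)"
    unfolding inner_Fmean .
qed


lemma var_bound:
  assumes root: "Fmean n F xs = 0"
    and ER: "\<And>x. (\<integral>\<^sup>+ v. ennreal ((norm ((Fsamp n F v x - Fsamp n F v xs)
                         - (Fmean n F x - Fmean n F xs)))^2) \<partial>D)
                  \<le> ennreal (\<delta> / 2 * (norm (x - xs))^2)"
    and sigma: "(\<integral>\<^sup>+ v. ennreal ((norm (Fsamp n F v xs))^2) \<partial>D) = ennreal s2"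
    and delta: "\<delta> > 0" and s2: "s2 \<ge> 0"
  shows "(\<integral>\<^sup>+ v. ennreal ((norm (Fsamp n F v x - Fmean n F x))^2) \<partial>D)
           \<le> ennreal (\<delta> * (norm (x - xs))^2 + 2 * s2)"
proof -
  let ?e = "\<lambda>v. (Fsamp n F v x - Fsamp n F v xs) - (Fmean n F x - Fmean n F xs)"
  let ?s = "\<lambda>v. Fsamp n F v xs"
  have eq: "Fsamp n F v x - Fmean n F x = ?e v + ?s v" for v using root by simp
  have me: "(\<lambda>v. ennreal ((norm (?e v))^2)) \<in> borel_measurable D"
    using Fsamp_meas_D[of x] Fsamp_meas_D[of xs] by measurable
  have ms: "(\<lambda>v. ennreal ((norm (?s v))^2)) \<in> borel_measurable D"
    using Fsamp_meas_D[of xs] by measurable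
  have "(\<integral>\<^sup>+ v. ennreal ((norm (Fsamp n F v x - Fmean n F x))^2) \<partial>D)
        \<le> (\<integral>\<^sup>+ v. 2 * ennreal ((norm (?e v))^2) + 2 * ennreal ((norm (?s v))^2) \<partial>D)"
  proof (rule nn_integral_mono)
    fix v
    have "(norm (Fsamp n F v x - Fmean n F x))^2 \<le> 2 * (norm (?e v))^2 + 2 * (norm (?s v))^2"
      unfolding eq by (rule norm_add_sq_le)
    then have "ennreal ((norm (Fsamp n F v x - Fmean n F x))^2) \<le> ennreal (2 * (norm (?e v))^2 + 2 * (norm (?s v))^2)"
      by (rule ennreal_leI)
    also have "\<dots> = ennreal (2 * (norm (?e v))^2) + ennreal (2 * (norm (?s v))^2)"
      by (rule ennreal_plus) auto
    also have "\<dots> = 2 * ennreal ((norm (?e v))^2) + 2 * ennreal ((norm (?s v))^2)"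
      by (simp only: ennreal_2mult zero_le_power2)
    finally show "ennreal ((norm (Fsamp n F v x - Fmean n F x))^2)
          \<le> 2 * ennreal ((norm (?e v))^2) + 2 * ennreal ((norm (?s v))^2)" .
  qed
  also have "\<dots> = 2 * (\<integral>\<^sup>+ v. ennreal ((norm (?e v))^2) \<partial>D) + 2 * (\<integral>\<^sup>+ v. ennreal ((norm (?s v))^2) \<partial>D)"
    using me ms by (simp add: nn_integral_add nn_integral_cmult)
  also have "\<dots> \<le> 2 * ennreal (\<delta> / 2 * (norm (x - xs))^2) + 2 * ennreal s2"
    using ER[of x] sigma by (intro add_mono mult_left_mono) auto
  also have "\<dots> = ennreal (\<delta> * (norm (x - xs))^2 + 2 * s2)"
  proof -
    have A: "0 \<le> \<delta> / 2 * (norm (x - xs))^2" using delta by simp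
    have "2 * ennreal (\<delta> / 2 * (norm (x - xs))^2) + 2 * ennreal s2
        = ennreal (2 * (\<delta> / 2 * (norm (x - xs))^2)) + ennreal (2 * s2)"
      by (simp only: ennreal_2mult[OF A] ennreal_2mult[OF s2])
    also have "\<dots> = ennreal (2 * (\<delta> / 2 * (norm (x - xs))^2) + 2 * s2)"
      using A s2 by (intro ennreal_plus[symmetric]) auto
    also have "2 * (\<delta> / 2 * (norm (x - xs))^2) + 2 * s2 = \<delta> * (norm (x - xs))^2 + 2 * s2"
      by simp
    finally show ?thesis .
  qed
  finally show ?thesis .
qed

lemma one_sample:
  assumes fin: "(\<integral>\<^sup>+ v. ennreal ((norm (Fsamp n F v x - Fmean n F x))^2) \<partial>D) \<le> ennreal B"
  shows "(\<integral>\<^sup>+ v. ennreal ((norm (u - w *\<^sub>R Fsamp n F v x))^2) \<partial>D)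
     = ennreal ((norm (u - w *\<^sub>R Fmean n F x))^2)
       + ennreal (w^2) * (\<integral>\<^sup>+ v. ennreal ((norm (Fsamp n F v x - Fmean n F x))^2) \<partial>D)"
proof -
  interpret D: prob_space D by (rule Dprob)
  let ?g = "\<lambda>v. Fsamp n F v x" and ?c = "Fmean n F x"
  define d where "d = u - w *\<^sub>R ?c"
  let ?h1 = "\<lambda>v. (norm (?g v - ?c))^2"
  let ?h2 = "\<lambda>v. inner d (?g v) - inner d ?c"
  have gm: "?g \<in> borel_measurable D" by (rule Fsamp_meas_D)
  have h1m: "?h1 \<in> borel_measurable D" using gm by measurable
  obtain V where V: "(\<integral>\<^sup>+ v. ennreal (?h1 v) \<partial>D) = ennreal V" "0 \<le> V"
  proof (cases "(\<integral>\<^sup>+ v. ennreal (?h1 v) \<partial>D)" rule: ennreal_cases)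
    case (real r) then show ?thesis using that by auto
  next
    case top then show ?thesis using fin by (simp add: top_unique)
  qed
  have h1i: "integrable D ?h1"
    by (rule integrableI_nn_integral_finite[OF h1m _ V(1)]) auto
  have h1e: "(\<integral>v. ?h1 v \<partial>D) = V"
    using nn_integral_eq_integral[OF h1i] V by (simp add: ennreal_inj)
  have h2i: "integrable D ?h2"
    using int_inner(1)[of d x] by (intro Bochner_Integration.integrable_diff) auto
  have h2e: "(\<integral>v. ?h2 v \<partial>D) = 0"
    using int_inner[of d x] by (simp add: Bochner_Integration.integral_diff D.prob_space)
  have pt: "(norm (u - w *\<^sub>R ?g v))^2 = (norm d)^2 + w^2 * ?h1 v - 2 * w * ?h2 v" for v
  proof -
    have "u - w *\<^sub>R ?g v = d - w *\<^sub>R (?g v - ?c)" unfolding d_def by (simp add: algebra_simps)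
    then show ?thesis by (simp add: norm_diff_scale_sq inner_diff_right)
  qed
  have i1: "integrable D (\<lambda>v. (norm d)^2 + w^2 * ?h1 v)"
    by (intro Bochner_Integration.integrable_add D.integrable_const integrable_mult_right h1i)
  have i2: "integrable D (\<lambda>v. 2 * w * ?h2 v)"
    by (intro integrable_mult_right h2i)
  have fi: "integrable D (\<lambda>v. (norm d)^2 + w^2 * ?h1 v - 2 * w * ?h2 v)"
    by (intro Bochner_Integration.integrable_diff i1 i2)
  have nn: "0 \<le> (norm d)^2 + w^2 * ?h1 v - 2 * w * ?h2 v" for v
    by (subst pt[symmetric]) simp
  have "(\<integral>\<^sup>+ v. ennreal ((norm (u - w *\<^sub>R ?g v))^2) \<partial>D)
      = (\<integral>\<^sup>+ v. ennreal ((norm d)^2 + w^2 * ?h1 v - 2 * w * ?h2 v) \<partial>D)"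
    by (simp only: pt)
  also have "\<dots> = ennreal (\<integral>v. (norm d)^2 + w^2 * ?h1 v - 2 * w * ?h2 v \<partial>D)"
    by (rule nn_integral_eq_integral[OF fi]) (rule AE_I2, rule nn)
  also have "(\<integral>v. (norm d)^2 + w^2 * ?h1 v - 2 * w * ?h2 v \<partial>D)
      = (\<integral>v. (norm d)^2 + w^2 * ?h1 v \<partial>D) - (\<integral>v. 2 * w * ?h2 v \<partial>D)"
    by (rule Bochner_Integration.integral_diff[OF i1 i2])
  also have "(\<integral>v. (norm d)^2 + w^2 * ?h1 v \<partial>D) = (\<integral>v. (norm d)^2 \<partial>D) + (\<integral>v. w^2 * ?h1 v \<partial>D)"
    by (rule Bochner_Integration.integral_add) (auto intro: h1i)
  also have "(\<integral>v. 2 * w * ?h2 v \<partial>D) = 0"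
    using h2e by simp
  also have "(\<integral>v. w^2 * ?h1 v \<partial>D) = w^2 * V"
    using h1e by simp
  also have "(\<integral>v. (norm d)^2 \<partial>D) = (norm d)^2"
    by (simp add: D.prob_space)
  also have "ennreal ((norm d)^2 + w^2 * V - 0) = ennreal ((norm d)^2) + ennreal (w^2) * ennreal V"
    using V(2) by (simp add: ennreal_plus ennreal_mult)
  finally have X: "(\<integral>\<^sup>+ v. ennreal ((norm (u - w *\<^sub>R ?g v))^2) \<partial>D) = ennreal ((norm d)^2) + ennreal (w^2) * ennreal V" .
  show ?thesis unfolding V(1) using X unfolding d_def .
qed

end




lemma state_upd: "k < m \<Longrightarrow> speg_state n F g h x0 (w(m:=y)) k = speg_state n F g h x0 w k"
  by (induction k) (auto simp: Let_def)

lemma snd_upd: "snd (speg_state n F g h x0 (w(k:=y)) k) = snd (speg_state n F g h x0 w k)"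
  by (cases k) (auto simp: Let_def state_upd)

context
  fixes n :: nat and F :: "nat \<Rightarrow> 'a::euclidean_space \<Rightarrow> 'a"
    and D :: "(nat \<Rightarrow> real) measure" and xs :: 'a
    and L \<mu> \<delta> s2 :: real
  assumes Fmeas: "\<And>i. i < n \<Longrightarrow> F i \<in> borel_measurable borel"
    and Dsd: "sampling_distribution n D"
    and root: "Fmean n F xs = 0"
    and lip: "L-lipschitz_on UNIV (Fmean n F)"
    and mu: "\<mu> > 0"
    and qsm: "\<And>x. inner (Fmean n F x) (x - xs) \<ge> \<mu> * (norm (x - xs))^2"
    and delta: "\<delta> > 0"
    and ER: "\<And>x. (\<integral>\<^sup>+ v. ennreal ((norm ((Fsamp n F v x - Fsamp n F v xs)
                         - (Fmean n F x - Fmean n F xs)))^2) \<partial>D)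
                  \<le> ennreal (\<delta> / 2 * (norm (x - xs))^2)"
    and sigma: "(\<integral>\<^sup>+ v. ennreal ((norm (Fsamp n F v xs))^2) \<partial>D) = ennreal s2"
    and s2: "s2 \<ge> 0"
begin

lemma mu_le_L: "\<mu> \<le> L"
proof -
  define e :: 'a where "e = (SOME i. i \<in> Basis)"
  have e0: "e \<noteq> 0" unfolding e_def by (intro nonzero_Basis SOME_Basis)
  have "\<mu> * (norm e)^2 \<le> inner (Fmean n F (xs + e)) e" using qsm[of "xs + e"] by simp
  also have "\<dots> \<le> norm (Fmean n F (xs + e)) * norm e" by (rule norm_cauchy_schwarz)
  also have "norm (Fmean n F (xs + e)) = dist (Fmean n F (xs + e)) (Fmean n F xs)" using root by (simp add: dist_norm)
  also have "\<dots> \<le> L * dist (xs + e) xs" using lipschitz_onD[OF lip] by simp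
  also have "dist (xs + e) xs = norm e" by (simp add: dist_norm)
  finally have "\<mu> * (norm e)^2 \<le> L * norm e * norm e" by (simp add: mult_right_mono)
  then have "\<mu> * (norm e)^2 \<le> L * (norm e)^2" by (simp add: power2_eq_square mult.assoc)
  moreover have "(norm e)^2 > 0" using e0 by simp
  ultimately show ?thesis by simp
qed

lemma state_meas:
  "(\<lambda>w. fst (speg_state n F g h x0 w k)) \<in> borel_measurable (PiM UNIV (\<lambda>_::nat. D)) \<and>
   (\<lambda>w. snd (speg_state n F g h x0 w k)) \<in> borel_measurable (PiM UNIV (\<lambda>_::nat. D))"
proof (induction k)
  case 0 then show ?case by simp
next
  case (Suc k)
  have c: "(\<lambda>w. w j) \<in> measurable (PiM UNIV (\<lambda>_::nat. D)) D" for j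
    by (rule measurable_component_singleton) simp
  have A: "(\<lambda>w. fst (speg_state n F g h x0 w k)) \<in> borel_measurable (PiM UNIV (\<lambda>_::nat. D))"
   and B: "(\<lambda>w. snd (speg_state n F g h x0 w k)) \<in> borel_measurable (PiM UNIV (\<lambda>_::nat. D))"
    using Suc by auto
  have G: "(\<lambda>w. Fsamp n F (w k) (snd (speg_state n F g h x0 w k))) \<in> borel_measurable (PiM UNIV (\<lambda>_::nat. D))"
    by (rule Fsamp_meas[OF Fmeas Dsd c B])
  have XH: "(\<lambda>w. fst (speg_state n F g h x0 w k) - g k *\<^sub>R Fsamp n F (w k) (snd (speg_state n F g h x0 w k)))
     \<in> borel_measurable (PiM UNIV (\<lambda>_::nat. D))"
    using A G by measurable
  have G2: "(\<lambda>w. Fsamp n F (w (Suc k)) (fst (speg_state n F g h x0 w k) - g k *\<^sub>R Fsamp n F (w k) (snd (speg_state n F g h x0 w k))))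
     \<in> borel_measurable (PiM UNIV (\<lambda>_::nat. D))"
    by (rule Fsamp_meas[OF Fmeas Dsd c XH])
  have X: "(\<lambda>w. fst (speg_state n F g h x0 w k) - h k *\<^sub>R Fsamp n F (w (Suc k)) (fst (speg_state n F g h x0 w k) - g k *\<^sub>R Fsamp n F (w k) (snd (speg_state n F g h x0 w k))))
     \<in> borel_measurable (PiM UNIV (\<lambda>_::nat. D))"
    using A G2 by measurable
  show ?case using X XH by (simp add: Let_def)
qed


lemma one_step:
  assumes w0: "0 < \<omega>" and wb: "\<omega> \<le> min (\<mu> / (18 * \<delta>)) (1 / (4 * L))"
  shows "Rsq n F D \<omega> x0 xs (Suc k) \<le> ennreal (1 - \<omega> * \<mu> / 2) * Rsq n F D \<omega> x0 xs k + ennreal (12 * \<omega>^2 * s2)"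
proof -
  interpret D: prob_space D by (rule Dprob[OF Fmeas Dsd])
  define M where "M = PiM UNIV (\<lambda>_::nat. D)"
  interpret M: prob_space M unfolding M_def by (intro prob_space_PiM) (rule D.prob_space_axioms)
  have Lpos: "L > 0" using mu_le_L mu by simp
  have wL: "\<omega> * L \<le> 1/4"
  proof -
    have "\<omega> \<le> 1 / (4 * L)" using wb by simp
    then show ?thesis using Lpos by (simp add: field_simps)
  qed
  have wd: "\<omega> * \<delta> \<le> \<mu> / 18"
  proof -
    have "\<omega> \<le> \<mu> / (18 * \<delta>)" using wb by simp
    then show ?thesis using delta by (simp add: field_simps)
  qed
  have wm: "\<omega> * \<mu> \<le> 1/4"
  proof -
    have "\<omega> * \<mu> \<le> \<omega> * L" using mu_le_L w0 by simp
    then show ?thesis using wL by simp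
  qed
  have B1: "\<omega>^2 * \<delta> \<le> \<omega> * \<mu> / 18"
  proof -
    have "\<omega>^2 * \<delta> = \<omega> * (\<omega> * \<delta>)" by (simp add: power2_eq_square)
    also have "\<dots> \<le> \<omega> * (\<mu> / 18)" using w0 wd by (intro mult_left_mono) auto
    finally show ?thesis by simp
  qed
  have B0: "0 \<le> \<omega>^2 * \<delta>" using delta by simp
  have c: "(\<lambda>w. w j) \<in> measurable M D" for j
    unfolding M_def by (rule measurable_component_singleton) simp
  define S where "S = speg_state n F (\<lambda>_. \<omega>) (\<lambda>_. \<omega>) x0"
  define a where "a w = fst (S w k)" for w
  define b where "b w = snd (S w k)" for w
  define gh where "gh w = Fsamp n F (w k) (b w)" for w
  define xh where "xh w = a w - \<omega> *\<^sub>R gh w" for w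
  define P where "P w = (norm (a w - xs))^2" for w
  define Q where "Q w = (norm (a w - b w))^2" for w
  define N2 where "N2 w = (norm (gh w - Fmean n F (b w)))^2" for w
  define al where "al = 1 - \<omega> * \<mu> + \<omega>^2 * \<delta>"
  define q where "q = 1 - \<omega> * \<mu> / 2"
  have al0: "0 \<le> al" unfolding al_def using wm B0 by linarith
  have am: "a \<in> borel_measurable M" unfolding a_def[abs_def] S_def M_def using state_meas by blast
  have bm: "b \<in> borel_measurable M" unfolding b_def[abs_def] S_def M_def using state_meas by blast
  have ghm: "gh \<in> borel_measurable M" unfolding gh_def[abs_def] by (rule Fsamp_meas[OF Fmeas Dsd c bm])
  have xhm: "xh \<in> borel_measurable M" unfolding xh_def[abs_def] using am ghm by measurable
  have Pm: "P \<in> borel_measurable M" unfolding P_def[abs_def] using am by measurable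
  have Qm: "Q \<in> borel_measurable M" unfolding Q_def[abs_def] using am bm by measurable
  have Ssuc: "S w (Suc k) = (a w - \<omega> *\<^sub>R Fsamp n F (w (Suc k)) (xh w), xh w)" for w
    unfolding a_def b_def xh_def gh_def S_def by (simp add: Let_def)
  define f2 where "f2 w v = ennreal ((norm (a w - \<omega> *\<^sub>R Fsamp n F v (xh w) - xs))^2
                     + (norm (a w - \<omega> *\<^sub>R Fsamp n F v (xh w) - xh w))^2)" for w v
  have RsqS: "Rsq n F D \<omega> x0 xs (Suc k) = (\<integral>\<^sup>+ w. f2 w (w (Suc k)) \<partial>M)"
    unfolding Rsq_def iid_samples_def M_def[symmetric] S_def[symmetric] Ssuc f2_def by simp
  have Rsqk: "Rsq n F D \<omega> x0 xs k = (\<integral>\<^sup>+ w. ennreal (P w + Q w) \<partial>M)"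
    unfolding Rsq_def iid_samples_def M_def[symmetric] S_def[symmetric] P_def Q_def a_def b_def ..
  have f2m: "(\<lambda>(w, v). f2 w v) \<in> borel_measurable (M \<Otimes>\<^sub>M D)"
  proof -
    have g2: "(\<lambda>p. Fsamp n F (snd p) (xh (fst p))) \<in> borel_measurable (M \<Otimes>\<^sub>M D)"
      by (rule Fsamp_meas[OF Fmeas Dsd]) (use xhm in measurable)
    show ?thesis unfolding f2_def case_prod_beta using am xhm g2 by measurable
  qed
  have f2inv: "f2 (w(Suc k := y)) = f2 w" for w y
  proof
    fix v show "f2 (w(Suc k := y)) v = f2 w v"
      unfolding f2_def xh_def gh_def a_def b_def S_def by (simp add: state_upd)
  qed
  have step2: "Rsq n F D \<omega> x0 xs (Suc k) = (\<integral>\<^sup>+ w. (\<integral>\<^sup>+ v. f2 w v \<partial>D) \<partial>M)"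
    unfolding RsqS M_def by (rule fresh_sample[OF D.prob_space_axioms f2m[unfolded M_def] f2inv])
  have inner: "(\<integral>\<^sup>+ v. f2 w v \<partial>D) \<le> ennreal (al * P w + (1/2) * Q w + 4 * \<omega>^2 * s2) + ennreal (4 * \<omega>^2) * ennreal (N2 w)" for w
  proof -
    let ?x = "xh w"
    define Bv where "Bv = \<delta> * (norm (?x - xs))^2 + 2 * s2"
    define V where "V = (\<integral>\<^sup>+ v. ennreal ((norm (Fsamp n F v ?x - Fmean n F ?x))^2) \<partial>D)"
    have VB: "V \<le> ennreal Bv" unfolding V_def Bv_def
      by (rule var_bound[OF Fmeas Dsd root ER sigma delta s2])
    have os: "(\<integral>\<^sup>+ v. ennreal ((norm (u - \<omega> *\<^sub>R Fsamp n F v ?x))^2) \<partial>D)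
        = ennreal ((norm (u - \<omega> *\<^sub>R Fmean n F ?x))^2) + ennreal (\<omega>^2) * V" for u
      unfolding V_def by (rule one_sample[OF Fmeas Dsd VB[unfolded V_def]])
    have gm: "(\<lambda>v. Fsamp n F v ?x) \<in> borel_measurable D" by (rule Fsamp_meas_D[OF Fmeas Dsd])
    have "(\<integral>\<^sup>+ v. f2 w v \<partial>D) = (\<integral>\<^sup>+ v. ennreal ((norm ((a w - xs) - \<omega> *\<^sub>R Fsamp n F v ?x))^2)
                                 + ennreal ((norm ((a w - ?x) - \<omega> *\<^sub>R Fsamp n F v ?x))^2) \<partial>D)"
    proof (rule nn_integral_cong)
      fix v
      have e1: "a w - \<omega> *\<^sub>R Fsamp n F v ?x - xs = (a w - xs) - \<omega> *\<^sub>R Fsamp n F v ?x" by (simp add: algebra_simps)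
      have e2: "a w - \<omega> *\<^sub>R Fsamp n F v ?x - ?x = (a w - ?x) - \<omega> *\<^sub>R Fsamp n F v ?x" by (simp add: algebra_simps)
      show "f2 w v = ennreal ((norm ((a w - xs) - \<omega> *\<^sub>R Fsamp n F v ?x))^2)
                                 + ennreal ((norm ((a w - ?x) - \<omega> *\<^sub>R Fsamp n F v ?x))^2)"
        unfolding f2_def e1 e2 by (rule ennreal_plus) simp_all
    qed
    also have "\<dots> = (\<integral>\<^sup>+ v. ennreal ((norm ((a w - xs) - \<omega> *\<^sub>R Fsamp n F v ?x))^2) \<partial>D)
                   + (\<integral>\<^sup>+ v. ennreal ((norm ((a w - ?x) - \<omega> *\<^sub>R Fsamp n F v ?x))^2) \<partial>D)"
    proof -
      have m1: "(\<lambda>v. ennreal ((norm ((a w - xs) - \<omega> *\<^sub>R Fsamp n F v ?x))^2)) \<in> borel_measurable D"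
        using gm by measurable
      have m2: "(\<lambda>v. ennreal ((norm ((a w - ?x) - \<omega> *\<^sub>R Fsamp n F v ?x))^2)) \<in> borel_measurable D"
        using gm by measurable
      show ?thesis by (rule nn_integral_add[OF m1 m2])
    qed
    also have "\<dots> = ennreal ((norm ((a w - xs) - \<omega> *\<^sub>R Fmean n F ?x))^2) + ennreal (\<omega>^2) * V
                   + (ennreal ((norm ((a w - ?x) - \<omega> *\<^sub>R Fmean n F ?x))^2) + ennreal (\<omega>^2) * V)"
      by (simp only: os)
    also have "\<dots> \<le> ennreal ((norm ((a w - xs) - \<omega> *\<^sub>R Fmean n F ?x))^2) + ennreal (\<omega>^2) * ennreal Bv
                   + (ennreal ((norm ((a w - ?x) - \<omega> *\<^sub>R Fmean n F ?x))^2) + ennreal (\<omega>^2) * ennreal Bv)"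
      using VB by (intro add_mono mult_left_mono order_refl) auto
    also have "\<dots> = ennreal ((norm ((a w - xs) - \<omega> *\<^sub>R Fmean n F ?x))^2 + (norm ((a w - ?x) - \<omega> *\<^sub>R Fmean n F ?x))^2
                    + 2 * \<omega>^2 * Bv)"
    proof -
      have Bv0: "0 \<le> Bv" unfolding Bv_def using delta s2 by simp
      show ?thesis using Bv0
        by (simp add: ennreal_plus[symmetric] ennreal_mult[symmetric] algebra_simps del: ennreal_plus)
    qed
    also have "\<dots> \<le> ennreal (al * P w + (1/2) * Q w + 4 * \<omega>^2 * N2 w + 4 * \<omega>^2 * s2)"
    proof (rule ennreal_leI)
      have ds: "(norm (a w - xs - \<omega> *\<^sub>R Fmean n F (a w - \<omega> *\<^sub>R gh w)))^2
          + (norm (a w - (a w - \<omega> *\<^sub>R gh w) - \<omega> *\<^sub>R Fmean n F (a w - \<omega> *\<^sub>R gh w)))^2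
          + 2 * \<omega>^2 * (\<delta> * (norm ((a w - \<omega> *\<^sub>R gh w) - xs))^2)
         \<le> (1 - \<omega> * \<mu> + \<omega>^2 * \<delta>) * (norm (a w - xs))^2 + (1/2) * (norm (a w - b w))^2
           + 4 * \<omega>^2 * (norm (gh w - Fmean n F (b w)))^2"
      proof (rule det_step[OF w0 wL wd wm mu delta lipschitz_on_nonneg[OF lip]])
        show "\<mu> * (norm ((a w - \<omega> *\<^sub>R gh w) - xs))^2 \<le> inner (Fmean n F (a w - \<omega> *\<^sub>R gh w)) ((a w - \<omega> *\<^sub>R gh w) - xs)"
          by (rule qsm)
        show "norm (Fmean n F (a w - \<omega> *\<^sub>R gh w) - Fmean n F (b w)) \<le> L * norm ((a w - \<omega> *\<^sub>R gh w) - b w)"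
          using lipschitz_onD[OF lip, of "a w - \<omega> *\<^sub>R gh w" "b w"] by (simp add: dist_norm)
      qed
      show "(norm ((a w - xs) - \<omega> *\<^sub>R Fmean n F ?x))^2 + (norm ((a w - ?x) - \<omega> *\<^sub>R Fmean n F ?x))^2 + 2 * \<omega>^2 * Bv
          \<le> al * P w + (1/2) * Q w + 4 * \<omega>^2 * N2 w + 4 * \<omega>^2 * s2"
        using ds unfolding Bv_def al_def P_def Q_def N2_def xh_def by (simp add: algebra_simps)
    qed
    also have "\<dots> = ennreal (al * P w + (1/2) * Q w + 4 * \<omega>^2 * s2) + ennreal (4 * \<omega>^2) * ennreal (N2 w)"
    proof -
      have "0 \<le> al * P w + (1/2) * Q w + 4 * \<omega>^2 * s2" unfolding P_def Q_def using al0 s2 by simp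
      moreover have "0 \<le> N2 w" unfolding N2_def by simp
      ultimately show ?thesis
        by (simp add: ennreal_plus[symmetric] ennreal_mult[symmetric] algebra_simps del: ennreal_plus)
    qed
    finally show ?thesis .
  qed
  define X where "X w = al * P w + (1/2) * Q w + 4 * \<omega>^2 * s2" for w
  define Y where "Y w = 2 * \<delta> * P w + 2 * \<delta> * Q w + 2 * s2" for w
  have Fmm: "Fmean n F \<in> borel_measurable borel"
    unfolding Fmean_def[abs_def] by (intro borel_measurable_scaleR borel_measurable_const borel_measurable_sum Fmeas) auto
  have N2m: "N2 \<in> borel_measurable M" unfolding N2_def[abs_def] using ghm bm Fmm by measurable
  have Xm: "(\<lambda>w. ennreal (X w)) \<in> borel_measurable M" unfolding X_def using Pm Qm by measurable
  have Ym: "(\<lambda>w. ennreal (Y w)) \<in> borel_measurable M" unfolding Y_def using Pm Qm by measurable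
  have N2em: "(\<lambda>w. ennreal (N2 w)) \<in> borel_measurable M" using N2m by measurable
  have X0: "0 \<le> X w" for w unfolding X_def P_def Q_def using al0 s2 by simp
  have Y0: "0 \<le> Y w" for w unfolding Y_def P_def Q_def using delta s2 by simp
  have step4: "(\<integral>\<^sup>+ w. (\<integral>\<^sup>+ v. f2 w v \<partial>D) \<partial>M) \<le> (\<integral>\<^sup>+ w. ennreal (X w) \<partial>M) + ennreal (4 * \<omega>^2) * (\<integral>\<^sup>+ w. ennreal (N2 w) \<partial>M)"
  proof -
    have "(\<integral>\<^sup>+ w. (\<integral>\<^sup>+ v. f2 w v \<partial>D) \<partial>M) \<le> (\<integral>\<^sup>+ w. ennreal (X w) + ennreal (4 * \<omega>^2) * ennreal (N2 w) \<partial>M)"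
      by (rule nn_integral_mono) (unfold X_def, rule inner)
    also have "\<dots> = (\<integral>\<^sup>+ w. ennreal (X w) \<partial>M) + (\<integral>\<^sup>+ w. ennreal (4 * \<omega>^2) * ennreal (N2 w) \<partial>M)"
      by (rule nn_integral_add[OF Xm]) (use N2em in measurable)
    also have "(\<integral>\<^sup>+ w. ennreal (4 * \<omega>^2) * ennreal (N2 w) \<partial>M) = ennreal (4 * \<omega>^2) * (\<integral>\<^sup>+ w. ennreal (N2 w) \<partial>M)"
      by (rule nn_integral_cmult[OF N2em])
    finally show ?thesis .
  qed
  define f1 where "f1 w v = ennreal ((norm (Fsamp n F v (b w) - Fmean n F (b w)))^2)" for w v
  have f1m: "(\<lambda>(w, v). f1 w v) \<in> borel_measurable (M \<Otimes>\<^sub>M D)"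
  proof -
    have g1: "(\<lambda>p. Fsamp n F (snd p) (b (fst p))) \<in> borel_measurable (M \<Otimes>\<^sub>M D)"
      by (rule Fsamp_meas[OF Fmeas Dsd]) (use bm in measurable)
    show ?thesis unfolding f1_def case_prod_beta using bm g1 Fmm by measurable
  qed
  have f1inv: "f1 (w(k := y)) = f1 w" for w y
  proof
    fix v show "f1 (w(k := y)) v = f1 w v"
      unfolding f1_def b_def S_def by (simp add: snd_upd)
  qed
  have step5: "(\<integral>\<^sup>+ w. ennreal (N2 w) \<partial>M) \<le> (\<integral>\<^sup>+ w. ennreal (Y w) \<partial>M)"
  proof -
    have "(\<integral>\<^sup>+ w. ennreal (N2 w) \<partial>M) = (\<integral>\<^sup>+ w. f1 w (w k) \<partial>M)"
      unfolding N2_def gh_def f1_def ..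
    also have "\<dots> = (\<integral>\<^sup>+ w. (\<integral>\<^sup>+ v. f1 w v \<partial>D) \<partial>M)"
      unfolding M_def by (rule fresh_sample[OF D.prob_space_axioms f1m[unfolded M_def] f1inv])
    also have "\<dots> \<le> (\<integral>\<^sup>+ w. ennreal (Y w) \<partial>M)"
    proof (rule nn_integral_mono)
      fix w
      have "(\<integral>\<^sup>+ v. f1 w v \<partial>D) \<le> ennreal (\<delta> * (norm (b w - xs))^2 + 2 * s2)"
        unfolding f1_def by (rule var_bound[OF Fmeas Dsd root ER sigma delta s2])
      also have "\<dots> \<le> ennreal (Y w)"
      proof (rule ennreal_leI)
        have eq: "b w - xs = (a w - xs) + (- (a w - b w))" by simp
        have "(norm (b w - xs))^2 \<le> 2 * P w + 2 * Q w"
          unfolding eq P_def Q_def using norm_add_sq_le[of "a w - xs" "- (a w - b w)"] by (simp only: norm_minus_cancel)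
        then have "\<delta> * (norm (b w - xs))^2 \<le> \<delta> * (2 * P w + 2 * Q w)"
          using delta by (intro mult_left_mono) auto
        then show "\<delta> * (norm (b w - xs))^2 + 2 * s2 \<le> Y w" unfolding Y_def by (simp add: algebra_simps)
      qed
      finally show "(\<integral>\<^sup>+ v. f1 w v \<partial>D) \<le> ennreal (Y w)" .
    qed
    finally show ?thesis .
  qed
  have step6: "(\<integral>\<^sup>+ w. ennreal (X w) \<partial>M) + ennreal (4 * \<omega>^2) * (\<integral>\<^sup>+ w. ennreal (Y w) \<partial>M)
      \<le> ennreal q * Rsq n F D \<omega> x0 xs k + ennreal (12 * \<omega>^2 * s2)"
  proof -
    have "(\<integral>\<^sup>+ w. ennreal (X w) \<partial>M) + ennreal (4 * \<omega>^2) * (\<integral>\<^sup>+ w. ennreal (Y w) \<partial>M)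
        = (\<integral>\<^sup>+ w. ennreal (X w) \<partial>M) + (\<integral>\<^sup>+ w. ennreal (4 * \<omega>^2) * ennreal (Y w) \<partial>M)"
      by (simp only: nn_integral_cmult[OF Ym])
    also have "\<dots> = (\<integral>\<^sup>+ w. ennreal (X w) + ennreal (4 * \<omega>^2) * ennreal (Y w) \<partial>M)"
      by (rule nn_integral_add[OF Xm, symmetric]) (use Ym in measurable)
    also have "\<dots> = (\<integral>\<^sup>+ w. ennreal (X w + 4 * \<omega>^2 * Y w) \<partial>M)"
    proof (rule nn_integral_cong)
      fix w
      have "ennreal (4 * \<omega>^2) * ennreal (Y w) = ennreal (4 * \<omega>^2 * Y w)"
        using Y0[of w] by (rule ennreal_mult[symmetric, rotated]) simp
      then show "ennreal (X w) + ennreal (4 * \<omega>^2) * ennreal (Y w) = ennreal (X w + 4 * \<omega>^2 * Y w)"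
        using X0[of w] Y0[of w] by (simp add: ennreal_plus)
    qed
    also have "\<dots> \<le> (\<integral>\<^sup>+ w. ennreal (q * (P w + Q w) + 12 * \<omega>^2 * s2) \<partial>M)"
    proof (rule nn_integral_mono, rule ennreal_leI)
      fix w
      have P0: "0 \<le> P w" and Q0: "0 \<le> Q w" unfolding P_def Q_def by simp_all
      have c1: "al + 8 * (\<omega>^2 * \<delta>) \<le> q" unfolding al_def q_def using B1 by linarith
      have c2: "1/2 + 8 * (\<omega>^2 * \<delta>) \<le> q" unfolding q_def using B1 wm by linarith
      have m1: "(al + 8 * (\<omega>^2 * \<delta>)) * P w \<le> q * P w" using c1 P0 by (rule mult_right_mono)
      have m2: "(1/2 + 8 * (\<omega>^2 * \<delta>)) * Q w \<le> q * Q w" using c2 Q0 by (rule mult_right_mono)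
      have e: "X w + 4 * \<omega>^2 * Y w = (al + 8 * (\<omega>^2 * \<delta>)) * P w + (1/2 + 8 * (\<omega>^2 * \<delta>)) * Q w + 12 * \<omega>^2 * s2"
        unfolding X_def Y_def by (simp add: algebra_simps)
      show "X w + 4 * \<omega>^2 * Y w \<le> q * (P w + Q w) + 12 * \<omega>^2 * s2"
        unfolding e using m1 m2 by (simp add: algebra_simps)
    qed
    also have "\<dots> = (\<integral>\<^sup>+ w. ennreal q * ennreal (P w + Q w) + ennreal (12 * \<omega>^2 * s2) \<partial>M)"
    proof (rule nn_integral_cong)
      fix w
      have P0: "0 \<le> P w" and Q0: "0 \<le> Q w" unfolding P_def Q_def by simp_all
      have q0: "0 \<le> q" unfolding q_def using wm by simp
      show "ennreal (q * (P w + Q w) + 12 * \<omega>^2 * s2) = ennreal q * ennreal (P w + Q w) + ennreal (12 * \<omega>^2 * s2)"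
        using P0 Q0 q0 s2 by (simp add: ennreal_plus[symmetric] ennreal_mult[symmetric] del: ennreal_plus)
    qed
    also have "\<dots> = (\<integral>\<^sup>+ w. ennreal q * ennreal (P w + Q w) \<partial>M) + (\<integral>\<^sup>+ w. ennreal (12 * \<omega>^2 * s2) \<partial>M)"
      by (rule nn_integral_add) (use Pm Qm in measurable)
    also have "(\<integral>\<^sup>+ w. ennreal q * ennreal (P w + Q w) \<partial>M) = ennreal q * (\<integral>\<^sup>+ w. ennreal (P w + Q w) \<partial>M)"
      by (rule nn_integral_cmult) (use Pm Qm in measurable)
    also have "(\<integral>\<^sup>+ w. ennreal (12 * \<omega>^2 * s2) \<partial>M) = ennreal (12 * \<omega>^2 * s2)"
      by (simp add: M.emeasure_space_1)
    finally show ?thesis unfolding Rsqk .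
  qed
  have "Rsq n F D \<omega> x0 xs (Suc k) \<le> (\<integral>\<^sup>+ w. ennreal (X w) \<partial>M) + ennreal (4 * \<omega>^2) * (\<integral>\<^sup>+ w. ennreal (N2 w) \<partial>M)"
    unfolding step2 by (rule step4)
  also have "\<dots> \<le> (\<integral>\<^sup>+ w. ennreal (X w) \<partial>M) + ennreal (4 * \<omega>^2) * (\<integral>\<^sup>+ w. ennreal (Y w) \<partial>M)"
    using step5 by (intro add_left_mono mult_left_mono) auto
  also have "\<dots> \<le> ennreal q * Rsq n F D \<omega> x0 xs k + ennreal (12 * \<omega>^2 * s2)"
    by (rule step6)
  finally show ?thesis unfolding q_def .
qed


lemma wm_bound:
  assumes w0: "0 < \<omega>" and wb: "\<omega> \<le> min (\<mu> / (18 * \<delta>)) (1 / (4 * L))"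
  shows "\<omega> * \<mu> \<le> 1/4"
proof -
  have Lpos: "L > 0" using mu_le_L mu by simp
  have "\<omega> \<le> 1 / (4 * L)" using wb by simp
  then have wL: "\<omega> * L \<le> 1/4" using Lpos by (simp add: field_simps)
  have "\<omega> * \<mu> \<le> \<omega> * L" using mu_le_L w0 by simp
  then show ?thesis using wL by simp
qed

lemma unroll:
  assumes w0: "0 < \<omega>" and wb: "\<omega> \<le> min (\<mu> / (18 * \<delta>)) (1 / (4 * L))"
  shows "Rsq n F D \<omega> x0 xs k \<le> ennreal ((1 - \<omega> * \<mu> / 2)^k) * Rsq n F D \<omega> x0 xs 0 + ennreal (24 * \<omega> * s2 / \<mu>)"
proof (induction k)
  case 0 show ?case by simp
next
  case (Suc k)
  define q where "q = 1 - \<omega> * \<mu> / 2"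
  define C where "C = 24 * \<omega> * s2 / \<mu>"
  define c where "c = 12 * \<omega>^2 * s2"
  define R0 where "R0 = Rsq n F D \<omega> x0 xs 0"
  have q0: "0 \<le> q" unfolding q_def using wm_bound[OF w0 wb] by simp
  have C0: "0 \<le> C" unfolding C_def using w0 s2 mu by simp
  have c0: "0 \<le> c" unfolding c_def using s2 by simp
  have "Rsq n F D \<omega> x0 xs (Suc k) \<le> ennreal q * Rsq n F D \<omega> x0 xs k + ennreal c"
    unfolding q_def c_def by (rule one_step[OF w0 wb])
  also have "\<dots> \<le> ennreal q * (ennreal (q^k) * R0 + ennreal C) + ennreal c"
    using Suc.IH unfolding q_def C_def R0_def by (intro add_right_mono mult_left_mono) auto
  also have "\<dots> = (ennreal q * ennreal (q^k)) * R0 + (ennreal q * ennreal C + ennreal c)"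
    by (simp add: distrib_left mult.assoc add.assoc)
  also have "ennreal q * ennreal (q^k) = ennreal (q^Suc k)"
    using q0 by (simp add: ennreal_mult[symmetric])
  also have "ennreal q * ennreal C + ennreal c = ennreal (q * C + c)"
    using q0 C0 c0 by (simp add: ennreal_mult[symmetric] ennreal_plus[symmetric] del: ennreal_plus)
  also have "q * C + c = C"
    unfolding q_def C_def c_def using mu by (simp add: field_simps power2_eq_square)
  finally show ?case unfolding q_def C_def R0_def .
qed

end

theorem theorem4p1:
  fixes n :: nat and F :: "nat \<Rightarrow> 'a::euclidean_space \<Rightarrow> 'a"
    and D :: "(nat \<Rightarrow> real) measure" and xs x0 :: 'a
    and L \<mu> \<delta> s2 :: real
  assumes n: "n \<ge> 1"
    and Fmeas: "\<And>i. i < n \<Longrightarrow> F i \<in> borel_measurable borel"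
    and D: "sampling_distribution n D"
    and root: "Fmean n F xs = 0"
    and lip: "L-lipschitz_on UNIV (Fmean n F)"
    and mu: "\<mu> > 0"
    and qsm: "\<And>x. inner (Fmean n F x) (x - xs) \<ge> \<mu> * (norm (x - xs))^2"
    and delta: "\<delta> > 0"
    and ER: "\<And>x. (\<integral>\<^sup>+ v. ennreal ((norm ((Fsamp n F v x - Fsamp n F v xs)
                         - (Fmean n F x - Fmean n F xs)))^2) \<partial>D)
                  \<le> ennreal (\<delta> / 2 * (norm (x - xs))^2)"
    and sigma: "(\<integral>\<^sup>+ v. ennreal ((norm (Fsamp n F v xs))^2) \<partial>D) = ennreal s2"
    and s2: "s2 \<ge> 0"
  shows
    "(\<forall>\<omega> k. 0 < \<omega> \<and> \<omega> \<le> min (\<mu> / (18 * \<delta>)) (1 / (4 * L)) \<longrightarrow>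
        Rsq n F D \<omega> x0 xs k
          \<le> ennreal ((1 - \<omega> * \<mu> / 2)^k) * Rsq n F D \<omega> x0 xs 0 + ennreal (24 * \<omega> * s2 / \<mu>))
     \<and>
     (\<forall>\<epsilon> \<omega> K. \<epsilon> > 0 \<longrightarrow>
        \<omega> = (if s2 = 0 then min (\<mu> / (18 * \<delta>)) (1 / (4 * L))
             else min (min (\<mu> / (18 * \<delta>)) (1 / (4 * L))) (\<epsilon> * \<mu> / (48 * s2))) \<longrightarrow>
        real K \<ge> max (max (8 * L / \<mu>) (36 * \<delta> / \<mu>^2)) (96 * s2 / (\<epsilon> * \<mu>^2))
                   * ln (2 * enn2real (Rsq n F D \<omega> x0 xs 0) / \<epsilon>) \<longrightarrow>
        (\<integral>\<^sup>+ w. ennreal ((norm (fst (speg_state n F (\<lambda>_. \<omega>) (\<lambda>_. \<omega>) x0 w K) - xs))^2)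
            \<partial>iid_samples D) \<le> ennreal \<epsilon>)"
proof -
  note ctx = Fmeas D root lip mu qsm delta ER sigma s2
  interpret Dp: prob_space D by (rule Dprob[OF Fmeas D])
  interpret P: prob_space "PiM UNIV (\<lambda>_::nat. D)" by (intro prob_space_PiM) (rule Dp.prob_space_axioms)
  have muL: "\<mu> \<le> L" by (rule mu_le_L[OF ctx])
  have Lpos: "L > 0" using muL mu by simp
  have part1: "\<forall>\<omega> k. 0 < \<omega> \<and> \<omega> \<le> min (\<mu> / (18 * \<delta>)) (1 / (4 * L)) \<longrightarrow>
        Rsq n F D \<omega> x0 xs k
          \<le> ennreal ((1 - \<omega> * \<mu> / 2)^k) * Rsq n F D \<omega> x0 xs 0 + ennreal (24 * \<omega> * s2 / \<mu>)"
    using unroll[OF ctx] by blast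
  have part2: "(\<integral>\<^sup>+ w. ennreal ((norm (fst (speg_state n F (\<lambda>_. \<omega>) (\<lambda>_. \<omega>) x0 w K) - xs))^2)
            \<partial>iid_samples D) \<le> ennreal \<epsilon>"
    if eps: "\<epsilon> > 0"
      and om: "\<omega> = (if s2 = 0 then min (\<mu> / (18 * \<delta>)) (1 / (4 * L))
             else min (min (\<mu> / (18 * \<delta>)) (1 / (4 * L))) (\<epsilon> * \<mu> / (48 * s2)))"
      and K: "real K \<ge> max (max (8 * L / \<mu>) (36 * \<delta> / \<mu>^2)) (96 * s2 / (\<epsilon> * \<mu>^2))
                   * ln (2 * enn2real (Rsq n F D \<omega> x0 xs 0) / \<epsilon>)"
    for \<epsilon> \<omega> K
  proof -
    define a1 where "a1 = \<mu> / (18 * \<delta>)"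
    define a2 where "a2 = 1 / (4 * L)"
    define a3 where "a3 = \<epsilon> * \<mu> / (48 * s2)"
    define Mx where "Mx = max (max (8 * L / \<mu>) (36 * \<delta> / \<mu>^2)) (96 * s2 / (\<epsilon> * \<mu>^2))"
    have a1p: "a1 > 0" unfolding a1_def using mu delta by simp
    have a2p: "a2 > 0" unfolding a2_def using Lpos by simp
    have a3p: "s2 \<noteq> 0 \<Longrightarrow> a3 > 0" unfolding a3_def using eps mu s2 by simp
    have cases: "\<omega> = a1 \<or> \<omega> = a2 \<or> (s2 \<noteq> 0 \<and> \<omega> = a3)"
      using om unfolding a1_def a2_def a3_def by (auto simp: min_def split: if_splits)
    have w0: "0 < \<omega>" using cases a1p a2p a3p by auto
    have wb: "\<omega> \<le> min (\<mu> / (18 * \<delta>)) (1 / (4 * L))" using om by auto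
    have w3: "s2 \<noteq> 0 \<Longrightarrow> \<omega> \<le> a3" using om unfolding a3_def by auto
    have wm: "\<omega> * \<mu> \<le> 1/4" by (rule wm_bound[OF ctx w0 wb])
    define q where "q = 1 - \<omega> * \<mu> / 2"
    define C where "C = 24 * \<omega> * s2 / \<mu>"
    define r where "r = (norm (x0 - xs))^2"
    have q0: "0 \<le> q" and q1: "q \<le> 1" unfolding q_def using wm w0 mu by auto
    have r0: "0 \<le> r" unfolding r_def by simp
    have R0: "Rsq n F D \<omega> x0 xs 0 = ennreal r"
      unfolding Rsq_def iid_samples_def r_def by (simp add: P.emeasure_space_1)
    have "(\<integral>\<^sup>+ w. ennreal ((norm (fst (speg_state n F (\<lambda>_. \<omega>) (\<lambda>_. \<omega>) x0 w K) - xs))^2) \<partial>iid_samples D)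
        \<le> Rsq n F D \<omega> x0 xs K"
      unfolding Rsq_def by (rule nn_integral_mono) (rule ennreal_leI, simp)
    also have "\<dots> \<le> ennreal (q^K) * ennreal r + ennreal C"
      using unroll[OF ctx w0 wb, of x0 K] unfolding R0 q_def C_def .
    also have "\<dots> = ennreal (q^K * r + C)"
    proof -
      have C0: "0 \<le> C" unfolding C_def using w0 s2 mu by simp
      show ?thesis using q0 r0 C0 by (simp add: ennreal_mult[symmetric] ennreal_plus[symmetric] del: ennreal_plus)
    qed
    also have "\<dots> \<le> ennreal \<epsilon>"
    proof (rule ennreal_leI)
      have Cb: "C \<le> \<epsilon> / 2"
      proof (cases "s2 = 0")
        case True then show ?thesis unfolding C_def using eps by simp
      next
        case False
        then have s2p: "s2 > 0" using s2 by simp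
        have "\<omega> \<le> \<epsilon> * \<mu> / (48 * s2)" using w3[OF False] unfolding a3_def .
        then have "\<omega> * (48 * s2) \<le> \<epsilon> * \<mu>" using s2p by (simp add: field_simps)
        then show ?thesis unfolding C_def using mu by (simp add: field_simps)
      qed
      have qb: "q^K * r \<le> \<epsilon> / 2"
      proof (cases "2 * r / \<epsilon> \<le> 1")
        case True
        have "q^K * r \<le> 1 * r" using q0 q1 r0 by (intro mult_right_mono power_le_one) auto
        also have "\<dots> \<le> \<epsilon> / 2" using True eps by (simp add: field_simps)
        finally show ?thesis .
      next
        case False
        then have rp: "r > 0" using eps r0 by (cases "r = 0") auto
        have lnp: "ln (2 * r / \<epsilon>) > 0" using False by simp
        have Mb: "2 / (\<omega> * \<mu>) \<le> Mx"
        proof -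
          from cases consider "\<omega> = a1" | "\<omega> = a2" | "s2 \<noteq> 0" "\<omega> = a3" by blast
          then show ?thesis
          proof cases
            case 1
            then have "2 / (\<omega> * \<mu>) = 36 * \<delta> / \<mu>^2"
              unfolding a1_def using mu delta w0 by (simp add: field_simps power2_eq_square)
            then show ?thesis unfolding Mx_def by simp
          next
            case 2
            then have "2 / (\<omega> * \<mu>) = 8 * L / \<mu>"
              unfolding a2_def using mu Lpos w0 by (simp add: field_simps)
            then show ?thesis unfolding Mx_def by simp
          next
            case 3
            then have "2 / (\<omega> * \<mu>) = 96 * s2 / (\<epsilon> * \<mu>^2)"
              unfolding a3_def using mu eps w0 by (simp add: field_simps power2_eq_square)
            then show ?thesis unfolding Mx_def by simp
          qed
        qed
        have "real K \<ge> Mx * ln (2 * r / \<epsilon>)" using K r0 unfolding Mx_def R0 by simp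
        moreover have "Mx * ln (2 * r / \<epsilon>) \<ge> 2 / (\<omega> * \<mu>) * ln (2 * r / \<epsilon>)"
          using Mb lnp by (intro mult_right_mono) auto
        ultimately have K2: "2 / (\<omega> * \<mu>) * ln (2 * r / \<epsilon>) \<le> real K" by linarith
        have wmp: "0 \<le> \<omega> * \<mu> / 2" using w0 mu by simp
        have "2 / (\<omega> * \<mu>) * ln (2 * r / \<epsilon>) * (\<omega> * \<mu> / 2) \<le> real K * (\<omega> * \<mu> / 2)"
          using K2 wmp by (rule mult_right_mono)
        moreover have "2 / (\<omega> * \<mu>) * ln (2 * r / \<epsilon>) * (\<omega> * \<mu> / 2) = ln (2 * r / \<epsilon>)"
          using w0 mu by (simp add: field_simps)
        ultimately have Kb: "real K * (\<omega> * \<mu> / 2) \<ge> ln (2 * r / \<epsilon>)" by simp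
        have "q^K \<le> (exp (- (\<omega> * \<mu> / 2)))^K"
          unfolding q_def using q0[unfolded q_def] exp_ge_add_one_self[of "- (\<omega> * \<mu> / 2)"]
          by (intro power_mono) auto
        also have "\<dots> = exp (real K * (- (\<omega> * \<mu> / 2)))" by (rule exp_of_nat_mult[symmetric])
        also have "\<dots> \<le> exp (- ln (2 * r / \<epsilon>))" using Kb by simp
        also have "\<dots> = \<epsilon> / (2 * r)" using rp eps by (simp add: exp_minus)
        finally have "q^K \<le> \<epsilon> / (2 * r)" .
        then have "q^K * r \<le> \<epsilon> / (2 * r) * r" using r0 by (rule mult_right_mono)
        also have "\<dots> = \<epsilon> / 2" using rp by simp
        finally show ?thesis .
      qed
      show "q^K * r + C \<le> \<epsilon>" using Cb qb by simp
    qed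
    finally show ?thesis .
  qed
  show ?thesis using part1 part2 by blast
qed


end
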